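(* Let $\tilde L$ be a minimum-size counterexample. Then for every doubly irreducible element $x$ of $\tilde L$ there exists a doubly reducible element $y$ of $\tilde L$ with $x<y$.
   Context: For a poset $P$, $x$ upper covers $y$ (and $y$ lower covers $x$) if $y<x$ with nothing strictly between. Join-irreducible: upper covers exactly one element; meet-irreducible: lower covers exactly one element; doubly irreducible: both. Join-reducible: upper covers more than one element; meet-reducible: lower covers more than one element; doubly reducible: both. For $x\in P$, ${\uparrow}x=\{y: x\le y\}$. A counterexample is a finite lattice $L$ with $|L|>1$ in which every join-irreducible $j$ satisfies $|{\uparrow}j|>|L|/2$; a minimum-size counterexample is a counterexample $\tilde L$ such that no counterexample has fewer elements. *)

theory Defs
  imports "HOL-Algebra.Lattice"
begin

text \<open>Finite lattices are represented by HOL-Algebra structures L with carrier L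
  and order le L, satisfying the locale lattice (which entails partial_order,
  i.e. eq L is equality).\<close>

definition upper_covers :: "('a, 'b) gorder_scheme \<Rightarrow> 'a \<Rightarrow> 'a \<Rightarrow> bool" where
  "upper_covers L x y \<longleftrightarrow> x \<in> carrier L \<and> y \<in> carrier L \<and> y \<sqsubset>\<^bsub>L\<^esub> x \<and>
     \<not> (\<exists>z\<in>carrier L. y \<sqsubset>\<^bsub>L\<^esub> z \<and> z \<sqsubset>\<^bsub>L\<^esub> x)"

definition lower_covers_set :: "('a, 'b) gorder_scheme \<Rightarrow> 'a \<Rightarrow> 'a set" where
  "lower_covers_set L x = {y \<in> carrier L. upper_covers L x y}"

definition upper_covers_set :: "('a, 'b) gorder_scheme \<Rightarrow> 'a \<Rightarrow> 'a set" where
  "upper_covers_set L x = {y \<in> carrier L. upper_covers L y x}"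

definition join_irreducible :: "('a, 'b) gorder_scheme \<Rightarrow> 'a \<Rightarrow> bool" where
  "join_irreducible L x \<longleftrightarrow> x \<in> carrier L \<and> card (lower_covers_set L x) = 1"

definition meet_irreducible :: "('a, 'b) gorder_scheme \<Rightarrow> 'a \<Rightarrow> bool" where
  "meet_irreducible L x \<longleftrightarrow> x \<in> carrier L \<and> card (upper_covers_set L x) = 1"

definition doubly_irreducible :: "('a, 'b) gorder_scheme \<Rightarrow> 'a \<Rightarrow> bool" where
  "doubly_irreducible L x \<longleftrightarrow> join_irreducible L x \<and> meet_irreducible L x"

definition join_reducible :: "('a, 'b) gorder_scheme \<Rightarrow> 'a \<Rightarrow> bool" where
  "join_reducible L x \<longleftrightarrow> x \<in> carrier L \<and> card (lower_covers_set L x) > 1"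

definition meet_reducible :: "('a, 'b) gorder_scheme \<Rightarrow> 'a \<Rightarrow> bool" where
  "meet_reducible L x \<longleftrightarrow> x \<in> carrier L \<and> card (upper_covers_set L x) > 1"

definition doubly_reducible :: "('a, 'b) gorder_scheme \<Rightarrow> 'a \<Rightarrow> bool" where
  "doubly_reducible L x \<longleftrightarrow> join_reducible L x \<and> meet_reducible L x"

definition up_set :: "('a, 'b) gorder_scheme \<Rightarrow> 'a \<Rightarrow> 'a set" where
  "up_set L x = {y \<in> carrier L. x \<sqsubseteq>\<^bsub>L\<^esub> y}"

definition counterexample :: "('a, 'b) gorder_scheme \<Rightarrow> bool" where
  "counterexample L \<longleftrightarrow> lattice L \<and> finite (carrier L) \<and> card (carrier L) > 1 \<and>
     (\<forall>j. join_irreducible L j \<longrightarrow> 2 * card (up_set L j) > card (carrier L))"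

text \<open>Minimality is compared against all counterexamples whose carrier is a set of
  natural numbers; every finite lattice is isomorphic to such a one.\<close>
definition min_counterexample :: "('a, 'b) gorder_scheme \<Rightarrow> bool" where
  "min_counterexample L \<longleftrightarrow> counterexample L \<and>
     (\<forall>M :: nat gorder. counterexample M \<longrightarrow> card (carrier L) \<le> card (carrier M))"

end

theory Submission
  imports Defs
begin


lemma iso_counterexample:
  fixes K :: "('a,'b) gorder_scheme" and M :: "('c,'d) gorder_scheme"
  assumes bij: "bij_betw g (carrier M) (carrier K)" and eqM: "eq M = (=)"
    and le: "\<And>u v. u\<in>carrier M \<Longrightarrow> v\<in>carrier M \<Longrightarrow> u \<sqsubseteq>\<^bsub>M\<^esub> v \<longleftrightarrow> g u \<sqsubseteq>\<^bsub>K\<^esub> g v"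
    and ce: "counterexample K"
  shows "counterexample M"
proof -
  have latK: "lattice K" and finK: "finite (carrier K)" and cardK: "card (carrier K) > 1"
    and jiK: "\<And>j. join_irreducible K j \<Longrightarrow> 2 * card (up_set K j) > card (carrier K)"
    using ce unfolding counterexample_def by auto
  interpret K: lattice K by (rule latK)
  have inj: "inj_on g (carrier M)" and img: "g ` carrier M = carrier K"
    using bij by (auto simp: bij_betw_def)
  have cardM: "card (carrier M) = card (carrier K)" using bij by (rule bij_betw_same_card)
  have finM: "finite (carrier M)" using finK inj img finite_imageD by metis
  have ls: "u \<sqsubset>\<^bsub>M\<^esub> v \<longleftrightarrow> g u \<sqsubset>\<^bsub>K\<^esub> g v" if "u\<in>carrier M" "v\<in>carrier M" for u v
  proof -
    have "u \<sqsubset>\<^bsub>M\<^esub> v \<longleftrightarrow> u \<sqsubseteq>\<^bsub>M\<^esub> v \<and> u \<noteq> v" by (simp add: lless_def eqM)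
    moreover have "u \<noteq> v \<longleftrightarrow> g u \<noteq> g v" using inj that unfolding inj_on_def by blast
    ultimately show ?thesis using le[OF that] K.lless_eq by simp
  qed
  have uc: "upper_covers M u v \<longleftrightarrow> upper_covers K (g u) (g v)" if "u\<in>carrier M" "v\<in>carrier M" for u v
  proof -
    have "(\<exists>z\<in>carrier M. v \<sqsubset>\<^bsub>M\<^esub> z \<and> z \<sqsubset>\<^bsub>M\<^esub> u) \<longleftrightarrow>
          (\<exists>z\<in>carrier K. g v \<sqsubset>\<^bsub>K\<^esub> z \<and> z \<sqsubset>\<^bsub>K\<^esub> g u)"
    proof
      assume "\<exists>z\<in>carrier M. v \<sqsubset>\<^bsub>M\<^esub> z \<and> z \<sqsubset>\<^bsub>M\<^esub> u"
      then obtain z where z: "z \<in> carrier M" "v \<sqsubset>\<^bsub>M\<^esub> z" "z \<sqsubset>\<^bsub>M\<^esub> u" by blast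
      have "g z \<in> carrier K" using z(1) img by blast
      moreover have "g v \<sqsubset>\<^bsub>K\<^esub> g z" "g z \<sqsubset>\<^bsub>K\<^esub> g u" using z ls that by auto
      ultimately show "\<exists>z\<in>carrier K. g v \<sqsubset>\<^bsub>K\<^esub> z \<and> z \<sqsubset>\<^bsub>K\<^esub> g u" by blast
    next
      assume "\<exists>z\<in>carrier K. g v \<sqsubset>\<^bsub>K\<^esub> z \<and> z \<sqsubset>\<^bsub>K\<^esub> g u"
      then obtain z where z: "z \<in> carrier K" "g v \<sqsubset>\<^bsub>K\<^esub> z" "z \<sqsubset>\<^bsub>K\<^esub> g u" by blast
      obtain z' where z': "z' \<in> carrier M" "z = g z'" using z(1) img by blast
      have "v \<sqsubset>\<^bsub>M\<^esub> z'" "z' \<sqsubset>\<^bsub>M\<^esub> u" using z z' ls that by auto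
      then show "\<exists>z\<in>carrier M. v \<sqsubset>\<^bsub>M\<^esub> z \<and> z \<sqsubset>\<^bsub>M\<^esub> u" using z' by blast
    qed
    moreover have "g u \<in> carrier K" "g v \<in> carrier K" using that img by auto
    moreover have "v \<sqsubset>\<^bsub>M\<^esub> u \<longleftrightarrow> g v \<sqsubset>\<^bsub>K\<^esub> g u" using ls that by simp
    ultimately show ?thesis unfolding upper_covers_def using that by simp
  qed
  have lc: "lower_covers_set K (g u) = g ` lower_covers_set M u" if "u\<in>carrier M" for u
  proof
    show "g ` lower_covers_set M u \<subseteq> lower_covers_set K (g u)"
      using uc that unfolding lower_covers_set_def upper_covers_def by auto
    show "lower_covers_set K (g u) \<subseteq> g ` lower_covers_set M u"
    proof
      fix q assume q: "q \<in> lower_covers_set K (g u)"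
      then have "q \<in> carrier K" unfolding lower_covers_set_def by auto
      then obtain p where p: "p \<in> carrier M" "q = g p" using img by auto
      then show "q \<in> g ` lower_covers_set M u"
        using q uc[OF that p(1)] unfolding lower_covers_set_def by auto
    qed
  qed
  have up: "up_set K (g u) = g ` up_set M u" if "u\<in>carrier M" for u
  proof
    show "g ` up_set M u \<subseteq> up_set K (g u)"
      using le that img unfolding up_set_def by auto
    show "up_set K (g u) \<subseteq> g ` up_set M u"
    proof
      fix q assume q: "q \<in> up_set K (g u)"
      then have "q \<in> carrier K" unfolding up_set_def by auto
      then obtain p where p: "p \<in> carrier M" "q = g p" using img by auto
      then show "q \<in> g ` up_set M u"
        using q le[OF that p(1)] unfolding up_set_def by auto
    qed
  qed
  have subinj: "inj_on g S" if "S \<subseteq> carrier M" for S using inj that inj_on_subset by blast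
  have ji: "2 * card (up_set M j) > card (carrier M)" if "join_irreducible M j" for j
  proof -
    have j: "j \<in> carrier M" using that unfolding join_irreducible_def by auto
    have "card (lower_covers_set K (g j)) = card (lower_covers_set M j)"
      using lc[OF j] subinj[of "lower_covers_set M j"] card_image
      unfolding lower_covers_set_def by fastforce
    then have "join_irreducible K (g j)" using that j img unfolding join_irreducible_def by auto
    then have "2 * card (up_set K (g j)) > card (carrier K)" by (rule jiK)
    moreover have "card (up_set K (g j)) = card (up_set M j)"
      using up[OF j] subinj[of "up_set M j"] card_image unfolding up_set_def by fastforce
    ultimately show ?thesis using cardM by simp
  qed
  have po: "partial_order M"
  proof
    show "x .=\<^bsub>M\<^esub> x" if "x \<in> carrier M" for x using eqM by simp
    show "y .=\<^bsub>M\<^esub> x" if "x .=\<^bsub>M\<^esub> y" for x y using that eqM by simp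
    show "x .=\<^bsub>M\<^esub> z" if "x .=\<^bsub>M\<^esub> y" "y .=\<^bsub>M\<^esub> z" for x y z using that eqM by simp
    show "x \<sqsubseteq>\<^bsub>M\<^esub> x" if "x \<in> carrier M" for x
      using le[OF that that] K.le_refl[of "g x"] that img by blast
    show "x .=\<^bsub>M\<^esub> y" if "x \<sqsubseteq>\<^bsub>M\<^esub> y" "y \<sqsubseteq>\<^bsub>M\<^esub> x" "x \<in> carrier M" "y \<in> carrier M" for x y
    proof -
      have gx: "g x \<in> carrier K" "g y \<in> carrier K" using that img by blast+
      have "g x \<sqsubseteq>\<^bsub>K\<^esub> g y" "g y \<sqsubseteq>\<^bsub>K\<^esub> g x" using le that by blast+
      then have "g x = g y" using K.le_antisym gx by blast
      then have "x = y" using inj that unfolding inj_on_def by blast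
      then show ?thesis using eqM by simp
    qed
    show "x \<sqsubseteq>\<^bsub>M\<^esub> z" if "x \<sqsubseteq>\<^bsub>M\<^esub> y" "y \<sqsubseteq>\<^bsub>M\<^esub> z" "x \<in> carrier M" "y \<in> carrier M" "z \<in> carrier M" for x y z
    proof -
      have gx: "g x \<in> carrier K" "g y \<in> carrier K" "g z \<in> carrier K" using that img by blast+
      have "g x \<sqsubseteq>\<^bsub>K\<^esub> g y" "g y \<sqsubseteq>\<^bsub>K\<^esub> g z" using le that by blast+
      then have "g x \<sqsubseteq>\<^bsub>K\<^esub> g z" using K.le_trans gx by blast
      then show ?thesis using le that by blast
    qed
    show "x \<sqsubseteq>\<^bsub>M\<^esub> z \<longleftrightarrow> y \<sqsubseteq>\<^bsub>M\<^esub> w" if "x .=\<^bsub>M\<^esub> y" "z .=\<^bsub>M\<^esub> w" for x y z w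
      using that eqM by simp
    show "(.=\<^bsub>M\<^esub>) = (=)" using eqM by simp
  qed
  interpret M: partial_order M by (rule po)
  have hinv: "\<exists>s\<in>carrier M. g s = t" if "t \<in> carrier K" for t
    using that unfolding img[symmetric] by (metis imageE)
  have lat: "lattice M"
  proof (unfold_locales)
    fix x y assume xy: "x \<in> carrier M" "y \<in> carrier M"
    have gxy: "g x \<in> carrier K" "g y \<in> carrier K" using xy img by blast+
    obtain s where s: "s \<in> carrier M" "g s = g x \<squnion>\<^bsub>K\<^esub> g y"
      using hinv[OF K.join_closed[OF gxy]] by blast
    have ub: "g x \<sqsubseteq>\<^bsub>K\<^esub> g s" "g y \<sqsubseteq>\<^bsub>K\<^esub> g s"
      using s(2) K.join_left[OF gxy] K.join_right[OF gxy] by simp_all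
    have lst: "g s \<sqsubseteq>\<^bsub>K\<^esub> g w" if "w \<in> carrier M" "g x \<sqsubseteq>\<^bsub>K\<^esub> g w" "g y \<sqsubseteq>\<^bsub>K\<^esub> g w" for w
    proof -
      have "g w \<in> carrier K" using that img by blast
      then show ?thesis using s(2) K.join_le[OF that(2,3) gxy] by simp
    qed
    have "least M s (Upper M {x, y})"
      unfolding least_def Upper_def using s(1) xy ub lst le by auto
    then show "\<exists>s. least M s (Upper M {x, y})" by blast
  next
    fix x y assume xy: "x \<in> carrier M" "y \<in> carrier M"
    have gxy: "g x \<in> carrier K" "g y \<in> carrier K" using xy img by blast+
    obtain s where s: "s \<in> carrier M" "g s = g x \<sqinter>\<^bsub>K\<^esub> g y"
      using hinv[OF K.meet_closed[OF gxy]] by blast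
    have ub: "g s \<sqsubseteq>\<^bsub>K\<^esub> g x" "g s \<sqsubseteq>\<^bsub>K\<^esub> g y"
      using s(2) K.meet_left[OF gxy] K.meet_right[OF gxy] by simp_all
    have lst: "g w \<sqsubseteq>\<^bsub>K\<^esub> g s" if "w \<in> carrier M" "g w \<sqsubseteq>\<^bsub>K\<^esub> g x" "g w \<sqsubseteq>\<^bsub>K\<^esub> g y" for w
    proof -
      have "g w \<in> carrier K" using that img by blast
      then show ?thesis using s(2) K.meet_le[OF that(2,3)] gxy by simp
    qed
    have "greatest M s (Lower M {x, y})"
      unfolding greatest_def Lower_def using s(1) xy ub lst le by auto
    then show "\<exists>s. greatest M s (Lower M {x, y})" by blast
  qed
  have "\<forall>j. join_irreducible M j \<longrightarrow> 2 * card (up_set M j) > card (carrier M)" using ji by blast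
  moreover have "card (carrier M) > 1" using cardM cardK by simp
  ultimately show ?thesis unfolding counterexample_def using lat finM by blast
qed



locale fl = lattice + assumes fin: "finite (carrier L)"

context fl
begin

lemma ex_minimal:
  assumes S: "S \<subseteq> carrier L" "S \<noteq> {}" shows "\<exists>w\<in>S. \<forall>v\<in>S. v \<sqsubseteq> w \<longrightarrow> v = w"
proof -
  define f where "f w = card {v \<in> carrier L. v \<sqsubseteq> w}" for w
  have finS: "finite (f ` S)" using fin S(1) finite_subset by blast
  have "Min (f ` S) \<in> f ` S" using Min_in[OF finS] S(2) by blast
  then obtain w where w: "w \<in> S" "f w = Min (f ` S)" by (metis imageE)
  show ?thesis
  proof (intro bexI[OF _ w(1)] ballI impI)
    fix v assume v: "v \<in> S" "v \<sqsubseteq> w"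
    show "v = w"
    proof (rule ccontr)
      assume ne: "v \<noteq> w"
      have vw: "v \<in> carrier L" "w \<in> carrier L" using v w S by auto
      have sub: "{u \<in> carrier L. u \<sqsubseteq> v} \<subseteq> {u \<in> carrier L. u \<sqsubseteq> w}"
        using le_trans[of _ v w] vw v(2) by blast
      have "w \<notin> {u \<in> carrier L. u \<sqsubseteq> v}" using le_antisym[of v w] v(2) vw ne by blast
      moreover have "w \<in> {u \<in> carrier L. u \<sqsubseteq> w}" using vw by simp
      ultimately have "{u \<in> carrier L. u \<sqsubseteq> v} \<subset> {u \<in> carrier L. u \<sqsubseteq> w}" using sub by blast
      then have "f v < f w" unfolding f_def by (rule psubset_card_mono[rotated]) (use fin in auto)
      moreover have "f w \<le> f v" using w(2) Min_le[OF finS] v(1) by simp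
      ultimately show False by simp
    qed
  qed
qed

lemma ex_maximal:
  assumes S: "S \<subseteq> carrier L" "S \<noteq> {}" shows "\<exists>w\<in>S. \<forall>v\<in>S. w \<sqsubseteq> v \<longrightarrow> v = w"
proof -
  define f where "f w = card {v \<in> carrier L. w \<sqsubseteq> v}" for w
  have finS: "finite (f ` S)" using fin S(1) finite_subset by blast
  have "Min (f ` S) \<in> f ` S" using Min_in[OF finS] S(2) by blast
  then obtain w where w: "w \<in> S" "f w = Min (f ` S)" by (metis imageE)
  show ?thesis
  proof (intro bexI[OF _ w(1)] ballI impI)
    fix v assume v: "v \<in> S" "w \<sqsubseteq> v"
    show "v = w"
    proof (rule ccontr)
      assume ne: "v \<noteq> w"
      have vw: "v \<in> carrier L" "w \<in> carrier L" using v w S by auto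
      have sub: "{u \<in> carrier L. v \<sqsubseteq> u} \<subseteq> {u \<in> carrier L. w \<sqsubseteq> u}"
        using le_trans[of w v] vw v(2) by blast
      have "w \<notin> {u \<in> carrier L. v \<sqsubseteq> u}" using le_antisym[of w v] v(2) vw ne by blast
      moreover have "w \<in> {u \<in> carrier L. w \<sqsubseteq> u}" using vw by simp
      ultimately have "{u \<in> carrier L. v \<sqsubseteq> u} \<subset> {u \<in> carrier L. w \<sqsubseteq> u}" using sub by blast
      then have "f v < f w" unfolding f_def by (rule psubset_card_mono[rotated]) (use fin in auto)
      moreover have "f w \<le> f v" using w(2) Min_le[OF finS] v(1) by simp
      ultimately show False by simp
    qed
  qed
qed

lemma cover_above:
  assumes "y \<in> carrier L" "z \<in> carrier L" "y \<sqsubset> z"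
  shows "\<exists>w\<in>carrier L. upper_covers L w y \<and> w \<sqsubseteq> z"
proof -
  define S where "S = {w\<in>carrier L. y \<sqsubset> w \<and> w \<sqsubseteq> z}"
  have "z \<in> S" using assms unfolding S_def by auto
  then obtain w where w: "w \<in> S" "\<forall>v\<in>S. v \<sqsubseteq> w \<longrightarrow> v = w"
    using ex_minimal[of S] unfolding S_def by blast
  have wc: "w \<in> carrier L" "y \<sqsubset> w" "w \<sqsubseteq> z" using w(1) unfolding S_def by auto
  have "\<not> (\<exists>u\<in>carrier L. y \<sqsubset> u \<and> u \<sqsubset> w)"
  proof
    assume "\<exists>u\<in>carrier L. y \<sqsubset> u \<and> u \<sqsubset> w"
    then obtain u where u: "u \<in> carrier L" "y \<sqsubset> u" "u \<sqsubset> w" by blast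
    have "u \<sqsubseteq> w" using u(3) lless_eq by simp
    then have "u \<sqsubseteq> z" using le_trans[OF _ wc(3) u(1) wc(1) assms(2)] by simp
    then have "u \<in> S" using u unfolding S_def by auto
    moreover have "u \<sqsubseteq> w" "u \<noteq> w" using u(3) lless_eq by simp_all
    ultimately show False using w(2) by blast
  qed
  then show ?thesis using wc assms unfolding upper_covers_def by blast
qed

lemma cover_below:
  assumes "y \<in> carrier L" "z \<in> carrier L" "y \<sqsubset> z"
  shows "\<exists>c\<in>carrier L. upper_covers L z c \<and> y \<sqsubseteq> c"
proof -
  define S where "S = {c\<in>carrier L. y \<sqsubseteq> c \<and> c \<sqsubset> z}"
  have "y \<in> S" using assms unfolding S_def by auto
  then obtain c where c: "c \<in> S" "\<forall>v\<in>S. c \<sqsubseteq> v \<longrightarrow> v = c"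
    using ex_maximal[of S] unfolding S_def by blast
  have cc: "c \<in> carrier L" "y \<sqsubseteq> c" "c \<sqsubset> z" using c(1) unfolding S_def by auto
  have "\<not> (\<exists>u\<in>carrier L. c \<sqsubset> u \<and> u \<sqsubset> z)"
  proof
    assume "\<exists>u\<in>carrier L. c \<sqsubset> u \<and> u \<sqsubset> z"
    then obtain u where u: "u \<in> carrier L" "c \<sqsubset> u" "u \<sqsubset> z" by blast
    have "c \<sqsubseteq> u" using u(2) lless_eq by simp
    then have "y \<sqsubseteq> u" using le_trans[OF cc(2) _ assms(1) cc(1) u(1)] by simp
    then have "u \<in> S" using u unfolding S_def by auto
    moreover have "c \<sqsubseteq> u" "u \<noteq> c" using u(2) lless_eq by auto
    ultimately show False using c(2) by blast
  qed
  then show ?thesis using cc assms unfolding upper_covers_def by blast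
qed

lemma unique_upper:
  assumes "upper_covers_set L x = {b}" "x \<in> carrier L" "z \<in> carrier L" "x \<sqsubset> z"
  shows "b \<sqsubseteq> z"
proof -
  obtain w where w: "w \<in> carrier L" "upper_covers L w x" "w \<sqsubseteq> z"
    using cover_above[OF assms(2-4)] by blast
  then have "w \<in> upper_covers_set L x" unfolding upper_covers_set_def by simp
  then show ?thesis using assms(1) w(3) by simp
qed

lemma unique_lower:
  assumes "lower_covers_set L x = {a}" "y \<in> carrier L" "x \<in> carrier L" "y \<sqsubset> x"
  shows "y \<sqsubseteq> a"
proof -
  obtain c where c: "c \<in> carrier L" "upper_covers L x c" "y \<sqsubseteq> c"
    using cover_below[OF assms(2-4)] by blast
  then have "c \<in> lower_covers_set L x" unfolding lower_covers_set_def by simp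
  then show ?thesis using assms(1) c(3) by simp
qed

lemma ji_exists:
  assumes u: "u \<in> carrier L" and v: "v \<in> carrier L" and nle: "\<not> u \<sqsubseteq> v"
  shows "\<exists>j. join_irreducible L j \<and> j \<sqsubseteq> u \<and> \<not> j \<sqsubseteq> v"
proof -
  define S where "S = {w\<in>carrier L. w \<sqsubseteq> u \<and> \<not> w \<sqsubseteq> v}"
  have "u \<in> S" using assms unfolding S_def by auto
  then obtain w where w: "w \<in> S" "\<forall>y\<in>S. y \<sqsubseteq> w \<longrightarrow> y = w"
    using ex_minimal[of S] unfolding S_def by blast
  have wc: "w \<in> carrier L" "w \<sqsubseteq> u" "\<not> w \<sqsubseteq> v" using w(1) unfolding S_def by auto
  have mc: "w \<sqinter> v \<in> carrier L" using wc v by simp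
  have "w \<sqinter> v \<sqsubseteq> w" using wc v meet_left by simp
  moreover have "w \<sqinter> v \<noteq> w" using meet_right[OF wc(1) v] wc(3) by auto
  ultimately have "w \<sqinter> v \<sqsubset> w" using lless_eq by simp
  then obtain c where c: "c \<in> carrier L" "upper_covers L w c"
    using cover_below[OF mc wc(1)] by blast
  have lowv: "y \<sqsubseteq> v" if "upper_covers L w y" for y
  proof -
    have y: "y \<in> carrier L" "y \<sqsubset> w" using that unfolding upper_covers_def by auto
    have "y \<sqsubseteq> w" using y(2) lless_eq by simp
    then have yu: "y \<sqsubseteq> u" using le_trans[OF _ wc(2) y(1) wc(1) u] by simp
    have "y \<noteq> w" using y lless_eq by simp
    then have "y \<notin> S" using w(2) \<open>y \<sqsubseteq> w\<close> by blast
    then show ?thesis using y(1) yu unfolding S_def by blast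
  qed
  have "lower_covers_set L w = {c}"
  proof
    show "{c} \<subseteq> lower_covers_set L w" using c unfolding lower_covers_set_def by simp
    show "lower_covers_set L w \<subseteq> {c}"
    proof
      fix c' assume "c' \<in> lower_covers_set L w"
      then have c': "c' \<in> carrier L" "upper_covers L w c'" unfolding lower_covers_set_def by auto
      show "c' \<in> {c}"
      proof (rule ccontr)
        assume ne: "c' \<notin> {c}"
        have cl: "c \<sqsubset> w" "c' \<sqsubset> w" using c c' unfolding upper_covers_def by auto
        have jc: "c \<squnion> c' \<in> carrier L" using c c' by simp
        have j1: "c \<sqsubseteq> c \<squnion> c'" using join_left c c' by simp
        have j2: "c' \<sqsubseteq> c \<squnion> c'" using join_right c c' by simp
        have j3: "c \<squnion> c' \<sqsubseteq> w" using join_le[of c w c'] cl c c' wc lless_eq by simp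
        have "c \<squnion> c' \<noteq> c"
        proof
          assume "c \<squnion> c' = c"
          then have "c' \<sqsubset> c" using j2 ne lless_eq by auto
          then show False using c'(2) cl c unfolding upper_covers_def by blast
        qed
        then have "c \<sqsubset> c \<squnion> c'" using j1 lless_eq by simp
        then have "c \<squnion> c' = w" using c(2) jc j3 lless_eq unfolding upper_covers_def by blast
        moreover have "c \<squnion> c' \<sqsubseteq> v" using join_le[of c v c'] lowv c(2) c'(2) c c' v by simp
        ultimately show False using wc(3) by simp
      qed
    qed
  qed
  then have "join_irreducible L w" using wc unfolding join_irreducible_def by simp
  then show ?thesis using wc by blast
qed

lemma top_exists:
  assumes ne: "carrier L \<noteq> {}" shows "\<exists>t\<in>carrier L. \<forall>y\<in>carrier L. y \<sqsubseteq> t"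
proof -
  obtain t where t: "t \<in> carrier L" "\<forall>v\<in>carrier L. t \<sqsubseteq> v \<longrightarrow> v = t"
    using ex_maximal[of "carrier L"] ne by blast
  have "y \<sqsubseteq> t" if y: "y \<in> carrier L" for y
  proof -
    have "t \<squnion> y = t" using t join_left[OF t(1) y] y by simp
    then show ?thesis using join_right[OF t(1) y] by simp
  qed
  then show ?thesis using t by blast
qed

lemma remove_lattice:
  assumes la: "lower_covers_set L x = {a}" and ub: "upper_covers_set L x = {b}"
    and x: "x \<in> carrier L"
  shows "lattice (L\<lparr>carrier := carrier L - {x}\<rparr>)" (is "lattice ?L'")
proof -
  have "a \<in> lower_covers_set L x" using la by simp
  then have a: "a \<in> carrier L" "a \<sqsubset> x" unfolding lower_covers_set_def upper_covers_def by auto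
  have "b \<in> upper_covers_set L x" using ub by simp
  then have b: "b \<in> carrier L" "x \<sqsubset> b" unfolding upper_covers_set_def upper_covers_def by auto
  have jn: "y \<squnion> z \<noteq> x" if yz: "y \<in> carrier L - {x}" "z \<in> carrier L - {x}" for y z
  proof
    assume j: "y \<squnion> z = x"
    have "y \<sqsubseteq> x" "z \<sqsubseteq> x" using join_left[of y z] join_right[of y z] yz j by auto
    then have "y \<sqsubset> x" "z \<sqsubset> x" using yz lless_eq by auto
    then have "y \<sqsubseteq> a" "z \<sqsubseteq> a" using unique_lower[OF la] yz x by auto
    then have "x \<sqsubseteq> a" using join_le[of y a z] yz a j by auto
    moreover have "a \<sqsubseteq> x" "a \<noteq> x" using a(2) lless_eq by simp_all
    ultimately show False using le_antisym[of a x] a(1) x by simp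
  qed
  have mt: "y \<sqinter> z \<noteq> x" if yz: "y \<in> carrier L - {x}" "z \<in> carrier L - {x}" for y z
  proof
    assume j: "y \<sqinter> z = x"
    have "x \<sqsubseteq> y" "x \<sqsubseteq> z" using meet_left[of y z] meet_right[of y z] yz j by auto
    then have "x \<sqsubset> y" "x \<sqsubset> z" using yz lless_eq by auto
    then have "b \<sqsubseteq> y" "b \<sqsubseteq> z" using unique_upper[OF ub] yz x by auto
    then have "b \<sqsubseteq> x" using meet_le[of b y z] yz b j by auto
    moreover have "x \<sqsubseteq> b" "x \<noteq> b" using b(2) lless_eq by simp_all
    ultimately show False using le_antisym[of b x] b(1) x by simp
  qed
  have eqL': "eq ?L' = (=)" using eq_is_equal by simp
  have po: "partial_order ?L'"
  proof
    show "x .=\<^bsub>?L'\<^esub> x" if "x \<in> carrier ?L'" for x using eqL' by simp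
    show "y .=\<^bsub>?L'\<^esub> x" if "x .=\<^bsub>?L'\<^esub> y" for x y using that eqL' by simp
    show "x .=\<^bsub>?L'\<^esub> z" if "x .=\<^bsub>?L'\<^esub> y" "y .=\<^bsub>?L'\<^esub> z" for x y z using that eqL' by simp
    show "x \<sqsubseteq>\<^bsub>?L'\<^esub> x" if "x \<in> carrier ?L'" for x using that by simp
    show "x .=\<^bsub>?L'\<^esub> y" if "x \<sqsubseteq>\<^bsub>?L'\<^esub> y" "y \<sqsubseteq>\<^bsub>?L'\<^esub> x" "x \<in> carrier ?L'" "y \<in> carrier ?L'" for x y
      using that le_antisym[of x y] eqL' by simp
    show "x \<sqsubseteq>\<^bsub>?L'\<^esub> z" if "x \<sqsubseteq>\<^bsub>?L'\<^esub> y" "y \<sqsubseteq>\<^bsub>?L'\<^esub> z" "x \<in> carrier ?L'" "y \<in> carrier ?L'" "z \<in> carrier ?L'" for x y z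
      using that le_trans[of x y z] by simp
    show "x \<sqsubseteq>\<^bsub>?L'\<^esub> z \<longleftrightarrow> y \<sqsubseteq>\<^bsub>?L'\<^esub> w" if "x .=\<^bsub>?L'\<^esub> y" "z .=\<^bsub>?L'\<^esub> w" for x y z w
      using that eqL' by simp
    show "(.=\<^bsub>?L'\<^esub>) = (=)" using eqL' by simp
  qed
  have sup: "\<exists>s. least ?L' s (Upper ?L' {y, z})" if yz: "y \<in> carrier ?L'" "z \<in> carrier ?L'" for y z
  proof -
    have yz': "y \<in> carrier L - {x}" "z \<in> carrier L - {x}" using yz by auto
    have "y \<squnion> z \<in> carrier L - {x}" using jn[OF yz'] yz' by simp
    moreover have "y \<sqsubseteq> y \<squnion> z" "z \<sqsubseteq> y \<squnion> z" using join_left join_right yz' by auto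
    moreover have "y \<squnion> z \<sqsubseteq> w" if "w \<in> carrier L" "y \<sqsubseteq> w" "z \<sqsubseteq> w" for w
      using join_le that yz' by auto
    moreover have U: "Upper ?L' {y, z} = {u \<in> carrier L - {x}. y \<sqsubseteq> u \<and> z \<sqsubseteq> u}"
      using yz' unfolding Upper_def by auto
    ultimately have "least ?L' (y \<squnion> z) (Upper ?L' {y, z})"
      unfolding least_def U by auto
    then show "\<exists>s. least ?L' s (Upper ?L' {y, z})" by blast
  qed
  have inf: "\<exists>s. greatest ?L' s (Lower ?L' {y, z})" if yz: "y \<in> carrier ?L'" "z \<in> carrier ?L'" for y z
  proof -
    have yz': "y \<in> carrier L - {x}" "z \<in> carrier L - {x}" using yz by auto
    have "y \<sqinter> z \<in> carrier L - {x}" using mt[OF yz'] yz' by simp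
    moreover have "y \<sqinter> z \<sqsubseteq> y" "y \<sqinter> z \<sqsubseteq> z" using meet_left meet_right yz' by auto
    moreover have "w \<sqsubseteq> y \<sqinter> z" if "w \<in> carrier L" "w \<sqsubseteq> y" "w \<sqsubseteq> z" for w
      using meet_le that yz' by auto
    moreover have U: "Lower ?L' {y, z} = {u \<in> carrier L - {x}. u \<sqsubseteq> y \<and> u \<sqsubseteq> z}"
      using yz' unfolding Lower_def by auto
    ultimately have "greatest ?L' (y \<sqinter> z) (Lower ?L' {y, z})"
      unfolding greatest_def U by auto
    then show "\<exists>s. greatest ?L' s (Lower ?L' {y, z})" by blast
  qed
  have u: "upper_semilattice ?L'"
    by (rule upper_semilattice.intro[OF po upper_semilattice_axioms.intro]) (rule sup)
  have l: "lower_semilattice ?L'"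
    by (rule lower_semilattice.intro[OF po lower_semilattice_axioms.intro]) (rule inf)
  show ?thesis by (rule lattice.intro[OF u l])
qed

end


lemma nat_version:
  fixes K :: "('a,'b) gorder_scheme"
  assumes ce: "counterexample K"
  shows "\<exists>M::nat gorder. counterexample M \<and> card (carrier M) = card (carrier K)"
proof -
  have fin: "finite (carrier K)" using ce unfolding counterexample_def by auto
  obtain g where g: "bij_betw g {0..<card (carrier K)} (carrier K)"
    using ex_bij_betw_nat_finite[OF fin] by blast
  define M :: "nat gorder" where
    "M = \<lparr>carrier = {0..<card (carrier K)}, eq = (=), le = (\<lambda>u v. g u \<sqsubseteq>\<^bsub>K\<^esub> g v)\<rparr>"
  have "counterexample M"
    by (rule iso_counterexample[of g M K]) (use g ce in \<open>simp_all add: M_def\<close>)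
  moreover have "card (carrier M) = card (carrier K)" by (simp add: M_def)
  ultimately show ?thesis by blast
qed

context fl
begin

lemma main:
  assumes n1: "card (carrier L) > 1"
    and jiall: "\<And>j. join_irreducible L j \<Longrightarrow> 2 * card (up_set L j) > card (carrier L)"
    and minim: "\<And>M :: nat gorder. counterexample M \<Longrightarrow> card (carrier L) \<le> card (carrier M)"
    and di: "doubly_irreducible L x"
    and nodr: "\<And>y. x \<sqsubset> y \<Longrightarrow> \<not> doubly_reducible L y"
  shows False
proof -
  define n where "n = card (carrier L)"
  have x: "x \<in> carrier L" and cl: "card (lower_covers_set L x) = 1"
    and cu: "card (upper_covers_set L x) = 1"
    using di unfolding doubly_irreducible_def join_irreducible_def meet_irreducible_def by auto
  obtain a where la: "lower_covers_set L x = {a}" using cl by (rule card_1_singletonE)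
  obtain b where ub: "upper_covers_set L x = {b}" using cu by (rule card_1_singletonE)
  have "a \<in> lower_covers_set L x" using la by simp
  then have a: "a \<in> carrier L" "a \<sqsubset> x" unfolding lower_covers_set_def upper_covers_def by auto
  have "b \<in> upper_covers_set L x" using ub by simp
  then have b: "b \<in> carrier L" "x \<sqsubset> b" unfolding upper_covers_set_def upper_covers_def by auto
  have ax: "a \<noteq> x" "a \<sqsubseteq> x" using a(2) lless_eq by auto
  have xb: "x \<noteq> b" "x \<sqsubseteq> b" using b(2) lless_eq by auto
  have ab: "a \<noteq> b"
  proof
    assume "a = b"
    then have "x \<sqsubseteq> a" using xb by simp
    then show False using le_antisym[of a x] ax a x by simp
  qed
  have jix: "2 * card (up_set L x) > n" using jiall di unfolding doubly_irreducible_def n_def by blast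
  have finup: "finite (up_set L y)" for y using fin unfolding up_set_def by simp
  define L' where "L' = L\<lparr>carrier := carrier L - {x}\<rparr>"
  have latL': "lattice L'" unfolding L'_def by (rule remove_lattice[OF la ub x])
  have cL': "carrier L' = carrier L - {x}" by (simp add: L'_def)
  have cardL': "card (carrier L') = n - 1" using x fin by (simp add: cL' n_def)
  have finL': "finite (carrier L')" using fin by (simp add: cL')
  have "{a, b} \<subseteq> carrier L'" using a b ax xb by (auto simp: cL')
  then have "card {a, b} \<le> card (carrier L')" using finL' by (intro card_mono)
  then have c2: "card (carrier L') > 1" using ab by simp
  have notce: "\<not> counterexample L'"
  proof
    assume "counterexample L'"
    then obtain M :: "nat gorder" where "counterexample M" "card (carrier M) = card (carrier L')"
      using nat_version by blast
    then have "n \<le> n - 1" using minim cardL' n_def by force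
    then show False using n1 n_def by simp
  qed
  then obtain j where jL': "join_irreducible L' j" and jsmall: "\<not> 2 * card (up_set L' j) > n - 1"
    using latL' finL' c2 cardL' unfolding counterexample_def by auto
  have leL': "le L' = le L" by (simp add: L'_def)
  have llL': "lless L' = lless L" by (intro ext) (simp add: L'_def lless_def)
  have upL': "up_set L' y = up_set L y - {x}" for y by (auto simp: up_set_def cL' leL')
  have ucL': "upper_covers L' p q \<longleftrightarrow> p \<in> carrier L - {x} \<and> q \<in> carrier L - {x} \<and> q \<sqsubset> p \<and>
      \<not> (\<exists>z\<in>carrier L - {x}. q \<sqsubset> z \<and> z \<sqsubset> p)" for p q
    unfolding upper_covers_def cL' llL' by simp
  have j: "j \<in> carrier L" "j \<noteq> x" using jL' unfolding join_irreducible_def cL' by auto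
  have jb: "j = b"
  proof (rule ccontr)
    assume jnb: "j \<noteq> b"
    have "lower_covers_set L' j = lower_covers_set L j"
    proof
      show "lower_covers_set L' j \<subseteq> lower_covers_set L j"
      proof
        fix q assume "q \<in> lower_covers_set L' j"
        then have q: "q \<in> carrier L" "q \<noteq> x" "q \<sqsubset> j"
          and nz: "\<not> (\<exists>z\<in>carrier L - {x}. q \<sqsubset> z \<and> z \<sqsubset> j)"
          unfolding lower_covers_set_def ucL' cL' by auto
        have "\<not> (\<exists>z\<in>carrier L. q \<sqsubset> z \<and> z \<sqsubset> j)"
        proof
          assume "\<exists>z\<in>carrier L. q \<sqsubset> z \<and> z \<sqsubset> j"
          then obtain z where z: "z \<in> carrier L" "q \<sqsubset> z" "z \<sqsubset> j" by blast
          with nz have zx: "z = x" by blast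
          have "b \<sqsubseteq> j" using unique_upper[OF ub x j(1)] z zx by simp
          then have bj: "b \<sqsubset> j" using jnb lless_eq by simp
          have qx: "q \<sqsubseteq> x" using z zx lless_eq by auto
          then have "q \<sqsubseteq> b" using le_trans[OF _ xb(2) q(1) x b(1)] by simp
          moreover have "q \<noteq> b"
          proof
            assume "q = b"
            then have "x \<sqsubseteq> q" using xb by simp
            then show False using le_antisym[of q x] qx q(1,2) x by simp
          qed
          ultimately have "q \<sqsubset> b" using lless_eq by simp
          moreover have "b \<in> carrier L - {x}" using b(1) xb(1) by simp
          ultimately show False using nz bj by blast
        qed
        then show "q \<in> lower_covers_set L j"
          using q j unfolding lower_covers_set_def upper_covers_def by simp
      qed
      show "lower_covers_set L j \<subseteq> lower_covers_set L' j"
      proof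
        fix q assume "q \<in> lower_covers_set L j"
        then have q: "q \<in> carrier L" "upper_covers L j q" unfolding lower_covers_set_def by auto
        have "q \<noteq> x"
        proof
          assume "q = x"
          then have "j \<in> upper_covers_set L x" using q j unfolding upper_covers_set_def by simp
          then show False using ub jnb by simp
        qed
        moreover have "q \<sqsubset> j" "\<not> (\<exists>z\<in>carrier L. q \<sqsubset> z \<and> z \<sqsubset> j)"
          using q(2) unfolding upper_covers_def by auto
        ultimately show "q \<in> lower_covers_set L' j"
          unfolding lower_covers_set_def cL' ucL' using q(1) j by auto
      qed
    qed
    then have "join_irreducible L j" using jL' j unfolding join_irreducible_def by simp
    then have big: "2 * card (up_set L j) > n" using jiall n_def by simp
    show False
    proof (cases "j \<sqsubseteq> x")
      case False
      then have "up_set L' j = up_set L j" using upL' unfolding up_set_def by auto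
      then show False using big jsmall by simp
    next
      case True
      have sub: "insert j (up_set L x - {x}) \<subseteq> up_set L' j"
      proof
        fix y assume "y \<in> insert j (up_set L x - {x})"
        then consider "y = j" | "y \<in> carrier L" "x \<sqsubseteq> y" "y \<noteq> x" unfolding up_set_def by auto
        then show "y \<in> up_set L' j"
        proof cases
          case 1 then show ?thesis using j unfolding upL' by (simp add: up_set_def)
        next
          case 2
          then have "j \<sqsubseteq> y" using le_trans[OF True _ j(1) x] by simp
          then show ?thesis using 2 unfolding upL' by (simp add: up_set_def)
        qed
      qed
      have jn: "j \<notin> up_set L x - {x}"
      proof
        assume "j \<in> up_set L x - {x}"
        then have "x \<sqsubseteq> j" unfolding up_set_def by simp
        then show False using le_antisym[OF True] j x by simp
      qed
      have xin: "x \<in> up_set L x" using x unfolding up_set_def by simp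
      have "card (insert j (up_set L x - {x})) = Suc (card (up_set L x - {x}))"
        using jn finup by simp
      also have "\<dots> = card (up_set L x)" using card_Suc_Diff1[OF finup xin] .
      finally have "card (insert j (up_set L x - {x})) = card (up_set L x)" .
      moreover have "card (insert j (up_set L x - {x})) \<le> card (up_set L' j)"
        using sub finup upL' by (intro card_mono) auto
      ultimately show False using jix jsmall by simp
    qed
  qed
  have "x \<notin> up_set L b"
  proof
    assume "x \<in> up_set L b"
    then have "b \<sqsubseteq> x" unfolding up_set_def by simp
    then show False using le_antisym[of x b] xb x b(1) by simp
  qed
  then have upb: "2 * card (up_set L b) \<le> n - 1" using jsmall jb upL' by simp
  have notji: "\<not> join_irreducible L y" if y: "y \<in> carrier L" "x \<sqsubset> y" for y
  proof
    assume ji: "join_irreducible L y"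
    have bly: "b \<sqsubseteq> y" using unique_upper[OF ub x y(1) y(2)] .
    have "up_set L y \<subseteq> up_set L b" unfolding up_set_def using le_trans[OF bly] y(1) b(1) by auto
    then have "card (up_set L y) \<le> card (up_set L b)" using finup by (intro card_mono)
    then show False using jiall[OF ji] upb n_def n1 by simp
  qed
  have jr: "card (lower_covers_set L y) > 1" if y: "y \<in> carrier L" "x \<sqsubset> y" for y
  proof -
    have "card (lower_covers_set L y) \<noteq> 1" using notji[OF y] y unfolding join_irreducible_def by simp
    moreover obtain c where "c \<in> carrier L" "upper_covers L y c" using cover_below[OF x y(1) y(2)] by blast
    then have "c \<in> lower_covers_set L y" unfolding lower_covers_set_def by simp
    moreover have "finite (lower_covers_set L y)" using fin unfolding lower_covers_set_def by simp
    ultimately show ?thesis by (metis card_0_eq empty_iff less_one linorder_neqE_nat)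
  qed
  have mr: "card (upper_covers_set L y) \<le> 1" if y: "y \<in> carrier L" "x \<sqsubset> y" for y
    using nodr[OF y(2)] jr[OF y] y
    unfolding doubly_reducible_def join_reducible_def meet_reducible_def by auto
  have uniq: "\<exists>w'. upper_covers_set L w = {w'}"
    if w: "w \<in> carrier L" "x \<sqsubseteq> w" "y \<in> carrier L" "w \<sqsubset> y" for w y
  proof -
    obtain w' where "w' \<in> carrier L" "upper_covers L w' w" using cover_above[OF w(1,3,4)] by blast
    then have "w' \<in> upper_covers_set L w" unfolding upper_covers_set_def by simp
    moreover have "finite (upper_covers_set L w)" using fin unfolding upper_covers_set_def by simp
    moreover have "card (upper_covers_set L w) \<le> 1"
    proof (cases "w = x")
      case True then show ?thesis using cu by simp
    next
      case False then show ?thesis using mr[of w] w lless_eq by simp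
    qed
    ultimately have "card (upper_covers_set L w) = 1"
      by (metis card_0_eq empty_iff le_neq_implies_less less_one)
    then show ?thesis by (metis card_1_singletonE)
  qed
  have chain: "y \<sqsubseteq> z \<or> z \<sqsubseteq> y"
    if yz: "y \<in> carrier L" "z \<in> carrier L" "x \<sqsubseteq> y" "x \<sqsubseteq> z" for y z
  proof (rule ccontr)
    assume nc: "\<not> (y \<sqsubseteq> z \<or> z \<sqsubseteq> y)"
    define w where "w = y \<sqinter> z"
    have wc: "w \<in> carrier L" "w \<sqsubseteq> y" "w \<sqsubseteq> z" "x \<sqsubseteq> w"
      unfolding w_def using yz meet_left meet_right meet_le[of x y z] x by auto
    have "w \<noteq> y" using wc nc by auto
    then have wy: "w \<sqsubset> y" using wc lless_eq by simp
    have "w \<noteq> z" using wc nc by auto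
    then have wz: "w \<sqsubset> z" using wc lless_eq by simp
    obtain w' where w': "upper_covers_set L w = {w'}" using uniq[OF wc(1) wc(4) yz(1) wy] by blast
    have "w' \<sqsubseteq> y" using unique_upper[OF w' wc(1) yz(1) wy] .
    moreover have "w' \<sqsubseteq> z" using unique_upper[OF w' wc(1) yz(2) wz] .
    moreover have "w' \<in> upper_covers_set L w" using w' by simp
    then have w'c: "w' \<in> carrier L" "w \<sqsubset> w'" unfolding upper_covers_set_def upper_covers_def by auto
    ultimately have "w' \<sqsubseteq> w" unfolding w_def using meet_le yz by simp
    then show False using le_antisym[of w w'] w'c wc(1) lless_eq by simp
  qed
  obtain t where t: "t \<in> carrier L" "\<forall>y\<in>carrier L. y \<sqsubseteq> t" using top_exists x by blast
  have xt: "x \<noteq> t"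
  proof
    assume "x = t"
    then have "b \<sqsubseteq> x" using t b(1) by simp
    then show False using le_antisym[of x b] xb x b(1) by simp
  qed
  define C where "C = up_set L x"
  define S where "S = C - {t}"
  have xS: "x \<in> S" using x xt unfolding S_def C_def up_set_def by simp
  have SA: "S \<subseteq> carrier L" unfolding S_def C_def up_set_def by auto
  obtain v where v: "v \<in> S" "\<forall>u\<in>S. v \<sqsubseteq> u \<longrightarrow> u = v" using ex_maximal[OF SA] xS by blast
  have vS: "v \<in> carrier L" "x \<sqsubseteq> v" "v \<noteq> t" using v(1) unfolding S_def C_def up_set_def by auto
  have below: "c \<sqsubseteq> v" if c: "c \<in> S" for c
  proof -
    have cc: "c \<in> carrier L" "x \<sqsubseteq> c" using c unfolding S_def C_def up_set_def by auto
    show ?thesis using chain[OF cc(1) vS(1) cc(2) vS(2)] v(2) c cc(1) by auto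
  qed
  have "\<not> t \<sqsubseteq> v" using le_antisym[of v t] t vS by auto
  then obtain j where jj: "join_irreducible L j" "j \<sqsubseteq> t" "\<not> j \<sqsubseteq> v"
    using ji_exists[OF t(1) vS(1)] by blast
  have jA: "j \<in> carrier L" using jj unfolding join_irreducible_def by simp
  have jbig: "2 * card (up_set L j) > n" using jiall[OF jj(1)] n_def by simp
  have jt: "j \<noteq> t"
  proof
    assume "j = t"
    then have "up_set L j = {t}" using t le_antisym unfolding up_set_def by auto
    then show False using jbig n1 n_def by simp
  qed
  have xj: "\<not> x \<sqsubseteq> j"
  proof
    assume "x \<sqsubseteq> j"
    then have "j \<in> S" using jA jt unfolding S_def C_def up_set_def by simp
    then show False using below jj(3) by blast
  qed
  define m where "m = j \<sqinter> x"
  have mc: "m \<in> carrier L" "m \<sqsubseteq> j" "m \<sqsubseteq> x"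
    unfolding m_def using jA x meet_left meet_right by auto
  have mC: "m \<notin> C"
  proof
    assume "m \<in> C"
    then have "x \<sqsubseteq> m" unfolding C_def up_set_def by simp
    then show False using xj le_trans[OF _ mc(2) x mc(1) jA] by simp
  qed
  have mj: "m \<notin> up_set L j"
  proof
    assume "m \<in> up_set L j"
    then have "j \<sqsubseteq> m" unfolding up_set_def by simp
    then have "j \<sqsubseteq> x" using le_trans[OF _ mc(3) jA mc(1) x] by simp
    then have "j \<sqsubseteq> v" using le_trans[OF _ vS(2) jA x vS(1)] by simp
    then show False using jj(3) by simp
  qed
  have sub: "up_set L j \<subseteq> insert t (carrier L - insert m C)"
  proof
    fix y assume y: "y \<in> up_set L j"
    show "y \<in> insert t (carrier L - insert m C)"
    proof (cases "y = t")
      case False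
      have "y \<notin> C"
      proof
        assume "y \<in> C"
        then have "y \<in> S" using False unfolding S_def by simp
        then have "y \<sqsubseteq> v" by (rule below)
        moreover have "j \<sqsubseteq> y" "y \<in> carrier L" using y unfolding up_set_def by auto
        ultimately show False using le_trans[of j y v] jA vS(1) jj(3) by simp
      qed
      moreover have "y \<noteq> m" using y mj by auto
      moreover have "y \<in> carrier L" using y unfolding up_set_def by simp
      ultimately show ?thesis by simp
    qed simp
  qed
  have finC: "finite C" unfolding C_def by (rule finup)
  have CA: "insert m C \<subseteq> carrier L" using mc(1) unfolding C_def up_set_def by auto
  have c1: "card (up_set L j) \<le> card (insert t (carrier L - insert m C))"
    using sub fin by (intro card_mono) auto
  have c2: "card (insert t (carrier L - insert m C)) \<le> card (carrier L - insert m C) + 1"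
    using fin by (simp add: card_insert_if)
  have c3: "card (carrier L - insert m C) = n - (card C + 1)"
    using card_Diff_subset[OF _ CA] finC mC n_def by simp
  have c4: "card (insert m C) \<le> n" using card_mono[OF fin CA] n_def by simp
  then have "card C + 1 \<le> n" using finC mC by simp
  have "2 * card C > n" using jix C_def by simp
  then show False using c1 c2 c3 jbig \<open>card C + 1 \<le> n\<close> by linarith
qed

end

theorem corollary2p8:
  fixes L :: "('a, 'b) gorder_scheme"
  assumes "min_counterexample L"
  shows "\<forall>x. doubly_irreducible L x \<longrightarrow>
           (\<exists>y. doubly_reducible L y \<and> x \<sqsubset>\<^bsub>L\<^esub> y)"
proof (intro allI impI)
  fix x assume di: "doubly_irreducible L x"
  have ce: "counterexample L"
    and minim: "\<And>M :: nat gorder. counterexample M \<Longrightarrow> card (carrier L) \<le> card (carrier M)"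
    using assms unfolding min_counterexample_def by auto
  have lat: "lattice L" and fin: "finite (carrier L)" and n1: "card (carrier L) > 1"
    and jiall: "\<And>j. join_irreducible L j \<Longrightarrow> 2 * card (up_set L j) > card (carrier L)"
    using ce unfolding counterexample_def by auto
  interpret fl L by (rule fl.intro[OF lat]) (rule fl_axioms.intro[OF fin])
  show "\<exists>y. doubly_reducible L y \<and> x \<sqsubset>\<^bsub>L\<^esub> y"
  proof (rule ccontr)
    assume "\<not> (\<exists>y. doubly_reducible L y \<and> x \<sqsubset>\<^bsub>L\<^esub> y)"
    then have nodr: "\<And>y. x \<sqsubset>\<^bsub>L\<^esub> y \<Longrightarrow> \<not> doubly_reducible L y" by blast
    show False using main[OF n1 jiall minim di nodr] .
  qed
qed

end
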